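(* Let $\epsilon=\frac{-1+i\sqrt3}{2}$ and let $D$ be the $\mathbb Q(\epsilon)$-algebra generated by $x,y$ subject to $x^3=2$, $y^3=2$, $yx=\epsilon xy$ (a central division algebra over $\mathbb Q(\epsilon)$), with the involution $\ast$ determined by $\epsilon^\ast=\epsilon^{-1}$, $x^\ast=x$, $y^\ast=y$. Then every maximal subfield $K$ of $D$ with $K^\ast\subseteq K$ is formally real with respect to $\ast|_K$, but $(D,\ast)$ is not formally real; explicitly, $d_1^\ast d_1+d_2^\ast d_2+d_3^\ast d_3+d_4^\ast d_4=0$ for $d_1=\epsilon^{-1}x+x^2+2y$, $d_2=1-\epsilon^{-1}xy-x^2y^2$, $d_3=2x-x^2+xy^2$, $d_4=3-x-x^2$.
   Context: An involution $\#$ on a ring $R$ is formally real if every finite sum of nonzero elements of the form $rr^\#$ ($r\in R$) is nonzero. A maximal subfield is a subfield equal to its own centralizer. *)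

theory Defs
  imports Complex_Main "HOL-Algebra.Algebra"
begin

definition eps :: complex where
  "eps = Complex (-1/2) (sqrt 3 / 2)"

definition Qeps :: "complex set" where
  "Qeps = {of_rat a + of_rat b * eps | a b. True}"

text \<open>Elements of D are written uniquely as sums of c(i,j) x^i y^j with 0 <= i,j < 3 and
  c(i,j) in Q(epsilon); we represent them by their coefficient functions.\<close>
type_synonym delt = "nat \<Rightarrow> nat \<Rightarrow> complex"

definition Dcar :: "delt set" where
  "Dcar = {f. (\<forall>i j. f i j \<in> Qeps) \<and> (\<forall>i j. (3 \<le> i \<or> 3 \<le> j) \<longrightarrow> f i j = 0)}"

definition dadd :: "delt \<Rightarrow> delt \<Rightarrow> delt" where
  "dadd f g = (\<lambda>i j. f i j + g i j)"

definition dzero :: delt where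
  "dzero = (\<lambda>i j. 0)"

definition done_D :: delt where
  "done_D = (\<lambda>i j. if i = 0 \<and> j = 0 then 1 else 0)"

text \<open>Multiplication from x^a y^b * x^c y^d = eps^(b c) x^(a+c) y^(b+d) (since y x = eps x y),
  reduced with x^3 = 2, y^3 = 2.\<close>
definition dmul :: "delt \<Rightarrow> delt \<Rightarrow> delt" where
  "dmul f g = (\<lambda>i j. if i < 3 \<and> j < 3 then
      (\<Sum>a<3. \<Sum>b<3. \<Sum>c<3. \<Sum>d<3.
         if (a + c) mod 3 = i \<and> (b + d) mod 3 = j
         then f a b * g c d * eps ^ (b * c) * 2 ^ ((a + c) div 3 + (b + d) div 3)
         else 0)
    else 0)"

definition D :: "delt ring" where
  "D = \<lparr>carrier = Dcar, monoid.mult = dmul, one = done_D, ring.zero = dzero, ring.add = dadd\<rparr>"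

definition sc :: "complex \<Rightarrow> delt" where
  "sc c = (\<lambda>i j. if i = 0 \<and> j = 0 then c else 0)"

definition gx :: delt where
  "gx = (\<lambda>i j. if i = 1 \<and> j = 0 then 1 else 0)"

definition gy :: delt where
  "gy = (\<lambda>i j. if i = 0 \<and> j = 1 then 1 else 0)"

text \<open>The involution: eps* = eps^-1 (complex conjugation on Q(eps)), x* = x, y* = y, and
  it is an anti-automorphism, so (c x^i y^j)* = cnj c y^j x^i = cnj c eps^(i j) x^i y^j.\<close>
definition dstar :: "delt \<Rightarrow> delt" where
  "dstar f = (\<lambda>i j. cnj (f i j) * eps ^ (i * j))"

definition centralizer_D :: "delt set \<Rightarrow> delt set" where
  "centralizer_D K = {d \<in> carrier D. \<forall>k\<in>K. d \<otimes>\<^bsub>D\<^esub> k = k \<otimes>\<^bsub>D\<^esub> d}"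

definition maximal_subfield_D :: "delt set \<Rightarrow> bool" where
  "maximal_subfield_D K \<longleftrightarrow> subfield K D \<and> centralizer_D K = K"

definition formally_real_D :: "delt set \<Rightarrow> bool" where
  "formally_real_D S \<longleftrightarrow>
     (\<forall>(n::nat) (r::nat \<Rightarrow> delt). n \<ge> 1 \<longrightarrow>
        (\<forall>i<n. r i \<in> S \<and> r i \<otimes>\<^bsub>D\<^esub> dstar (r i) \<noteq> \<zero>\<^bsub>D\<^esub>) \<longrightarrow>
        finsum D (\<lambda>i. r i \<otimes>\<^bsub>D\<^esub> dstar (r i)) {..<n} \<noteq> \<zero>\<^bsub>D\<^esub>)"

definition d1 :: delt where
  "d1 = sc (inverse eps) \<otimes>\<^bsub>D\<^esub> gx \<oplus>\<^bsub>D\<^esub> gx \<otimes>\<^bsub>D\<^esub> gx \<oplus>\<^bsub>D\<^esub> sc 2 \<otimes>\<^bsub>D\<^esub> gy"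

definition d2 :: delt where
  "d2 = \<one>\<^bsub>D\<^esub> \<ominus>\<^bsub>D\<^esub> sc (inverse eps) \<otimes>\<^bsub>D\<^esub> gx \<otimes>\<^bsub>D\<^esub> gy
          \<ominus>\<^bsub>D\<^esub> gx \<otimes>\<^bsub>D\<^esub> gx \<otimes>\<^bsub>D\<^esub> gy \<otimes>\<^bsub>D\<^esub> gy"

definition d3 :: delt where
  "d3 = sc 2 \<otimes>\<^bsub>D\<^esub> gx \<ominus>\<^bsub>D\<^esub> gx \<otimes>\<^bsub>D\<^esub> gx \<oplus>\<^bsub>D\<^esub> gx \<otimes>\<^bsub>D\<^esub> gy \<otimes>\<^bsub>D\<^esub> gy"

definition d4 :: delt where
  "d4 = sc 3 \<ominus>\<^bsub>D\<^esub> gx \<ominus>\<^bsub>D\<^esub> gx \<otimes>\<^bsub>D\<^esub> gx"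

end

theory Submission
  imports Defs "HOL-Library.Function_Algebras"
begin

lemma eps_sq: "eps^2 = -1 - eps"
  by (simp add: eps_def power2_eq_square complex_eq_iff field_simps; simp add: algebra_simps flip: power2_eq_square)

lemma eps_cube: "eps^3 = 1"
proof -
  have "eps^3 = eps * eps^2" by (simp add: power3_eq_cube power2_eq_square)
  also have "\<dots> = 1" by (simp add: eps_sq algebra_simps) (simp add: eps_sq flip: power2_eq_square)
  finally show ?thesis .
qed

lemma eps_pow_mod: "eps ^ n = eps ^ (n mod 3)"
proof -
  have "eps ^ n = eps ^ (3 * (n div 3) + n mod 3)" by (metis div_mult_mod_eq mult.commute)
  also have "\<dots> = eps ^ (n mod 3)" unfolding power_add power_mult eps_cube by simp
  finally show ?thesis .
qed

lemma eps_pow_cong: "m mod 3 = n mod 3 \<Longrightarrow> eps ^ m = eps ^ n"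
  by (metis eps_pow_mod)

lemma cnj_eps: "cnj eps = eps^2"
  by (simp add: eps_sq) (simp add: eps_def complex_eq_iff)

lemma eps_ne1: "eps \<noteq> 1" by (simp add: eps_def complex_eq_iff)
lemma Im_eps: "Im eps = sqrt 3 / 2" by (simp add: eps_def)
lemma eps_nz: "eps \<noteq> 0" by (simp add: eps_def complex_eq_iff)
lemma inverse_eps: "inverse eps = eps^2"
  using eps_cube by (simp add: field_simps eps_nz) (metis power3_eq_cube power2_eq_square mult.assoc)

lemma Qeps_iff: "z \<in> Qeps \<longleftrightarrow> (\<exists>a b. z = of_rat a + of_rat b * eps)"
  by (auto simp: Qeps_def)

lemma Qeps_rat[simp]: "of_rat a \<in> Qeps"
  unfolding Qeps_iff by (rule exI[of _ a], rule exI[of _ 0]) simp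
lemma Qeps_0[simp]: "0 \<in> Qeps" using Qeps_rat[of 0] by simp
lemma Qeps_1[simp]: "1 \<in> Qeps" using Qeps_rat[of 1] by simp
lemma Qeps_eps[simp]: "eps \<in> Qeps"
  unfolding Qeps_iff by (rule exI[of _ 0], rule exI[of _ 1]) simp
lemma Qeps_add[simp]: "x \<in> Qeps \<Longrightarrow> y \<in> Qeps \<Longrightarrow> x + y \<in> Qeps"
  unfolding Qeps_iff
  by (auto, rule_tac x="a+aa" in exI, rule_tac x="b+ba" in exI, simp add: of_rat_add algebra_simps)
lemma Qeps_uminus[simp]: "x \<in> Qeps \<Longrightarrow> - x \<in> Qeps"
  unfolding Qeps_iff
  by (auto, rule_tac x="-a" in exI, rule_tac x="-b" in exI, simp add: of_rat_minus algebra_simps)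
lemma Qeps_diff[simp]: "x \<in> Qeps \<Longrightarrow> y \<in> Qeps \<Longrightarrow> x - y \<in> Qeps"
  using Qeps_add[of x "-y"] by simp
lemma Qeps_mult[simp]: "x \<in> Qeps \<Longrightarrow> y \<in> Qeps \<Longrightarrow> x * y \<in> Qeps"
proof -
  assume "x \<in> Qeps" "y \<in> Qeps"
  then obtain a b c d where x: "x = of_rat a + of_rat b * eps" and y: "y = of_rat c + of_rat d * eps"
    unfolding Qeps_iff by blast
  have "x * y = of_rat (a * c - b * d) + of_rat (a * d + b * c - b * d) * eps"
  proof -
    have e: "eps * eps = -1 - eps" using eps_sq by (simp add: power2_eq_square)
    have "x * y = of_rat a * of_rat c + (of_rat a * of_rat d + of_rat b * of_rat c) * eps + of_rat b * of_rat d * (eps * eps)"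
      unfolding x y by (simp add: algebra_simps)
    also have "\<dots> = of_rat (a * c - b * d) + of_rat (a * d + b * c - b * d) * eps"
      unfolding e by (simp add: of_rat_add of_rat_mult of_rat_diff algebra_simps)
    finally show ?thesis .
  qed
  thus ?thesis unfolding Qeps_iff by blast
qed
lemma Qeps_pow[simp]: "x \<in> Qeps \<Longrightarrow> x ^ n \<in> Qeps"
  by (induct n) auto
lemma Qeps_of_nat[simp]: "of_nat n \<in> Qeps"
  using Qeps_rat[of "of_nat n"] by simp
lemma Qeps_numeral[simp]: "numeral n \<in> Qeps"
  using Qeps_rat[of "numeral n"] by simp
lemma Qeps_sum[simp]: "(\<And>x. x \<in> A \<Longrightarrow> f x \<in> Qeps) \<Longrightarrow> sum f A \<in> Qeps"
  by (induct A rule: infinite_finite_induct) auto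
lemma Qeps_cnj[simp]: "x \<in> Qeps \<Longrightarrow> cnj x \<in> Qeps"
proof -
  assume "x \<in> Qeps"
  then obtain a b where x: "x = of_rat a + of_rat b * eps" unfolding Qeps_iff by blast
  have "cnj x = of_rat a + of_rat b * cnj eps" unfolding x
    by (simp add: of_rat_def)  
  thus ?thesis by (simp add: cnj_eps)
qed
lemma Qeps_inverse[simp]: "x \<in> Qeps \<Longrightarrow> inverse x \<in> Qeps"
proof -
  assume x: "x \<in> Qeps"
  show ?thesis
  proof (cases "x = 0")
    case True thus ?thesis by simp
  next
    case False
    have n: "x * cnj x \<in> Qeps" using x by simp
    have "inverse x = cnj x * inverse (x * cnj x)" using False by (simp add: field_simps)
    moreover have "inverse (x * cnj x) \<in> Qeps"
    proof -
      obtain a b where ab: "x * cnj x = of_rat a + of_rat b * eps" using n unfolding Qeps_iff by blast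
      have "Im (x * cnj x) = 0" by (simp add: complex_mult_cnj)
      hence "of_rat b * Im eps = (0::real)" using ab by (simp add: of_rat_def)
      hence "b = 0" using Im_eps by simp
      thus ?thesis using ab by (simp flip: of_rat_inverse)
    qed
    ultimately show ?thesis using x Qeps_mult Qeps_cnj by metis
  qed
qed
lemma Qeps_divide[simp]: "x \<in> Qeps \<Longrightarrow> y \<in> Qeps \<Longrightarrow> x / y \<in> Qeps"
  by (simp add: divide_inverse)
lemma Qeps_real: "x \<in> Qeps \<Longrightarrow> cnj x = x \<Longrightarrow> Im x = 0"
  by (simp add: complex_eq_iff)


definition mnm :: "complex \<Rightarrow> nat \<Rightarrow> nat \<Rightarrow> delt" where
  "mnm x a b = (\<lambda>i j. if i = a \<and> j = b then x else 0)"

definition supp :: "delt \<Rightarrow> bool" where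
  "supp f \<longleftrightarrow> (\<forall>i j. (3 \<le> i \<or> 3 \<le> j) \<longrightarrow> f i j = 0)"

lemma delta4:
  fixes a b c d :: nat
  assumes "a < 3" "b < 3" "c < 3" "d < 3"
  shows "(\<Sum>a'<3. \<Sum>b'<3. \<Sum>c'<3. \<Sum>d'<3. (if d' = d then (if c' = c then (if b' = b then (if a' = a then G a' b' c' d' else 0) else 0) else 0) else 0)) = (G a b c d :: complex)"
  using assms by (simp add: sum.delta)

lemma dmul_mono:
  assumes "a < 3" "b < 3" "c < 3" "d < 3"
  shows "dmul (mnm x a b) (mnm y c d) =
    mnm (x * y * eps ^ (b * c) * 2 ^ ((a + c) div 3 + (b + d) div 3)) ((a + c) mod 3) ((b + d) mod 3)"
proof (rule ext, rule ext)
  fix i j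
  show "dmul (mnm x a b) (mnm y c d) i j = mnm (x * y * eps ^ (b * c) * 2 ^ ((a + c) div 3 + (b + d) div 3)) ((a + c) mod 3) ((b + d) mod 3) i j"
  proof (cases "i < 3 \<and> j < 3")
    case True
    let ?G = "\<lambda>a b c d. if (a + c) mod 3 = i \<and> (b + d) mod 3 = j
         then x * y * eps ^ (b * c) * 2 ^ ((a + c) div 3 + (b + d) div 3) else 0"
    have "dmul (mnm x a b) (mnm y c d) i j = (\<Sum>a'<3. \<Sum>b'<3. \<Sum>c'<3. \<Sum>d'<3.
         if (a' + c') mod 3 = i \<and> (b' + d') mod 3 = j
         then mnm x a b a' b' * mnm y c d c' d' * eps ^ (b' * c') * 2 ^ ((a' + c') div 3 + (b' + d') div 3)
         else 0)"
      using True by (simp add: dmul_def)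
    also have "\<dots> = (\<Sum>a'<3. \<Sum>b'<3. \<Sum>c'<3. \<Sum>d'<3. (if d' = d then (if c' = c then (if b' = b then (if a' = a then ?G a' b' c' d' else 0) else 0) else 0) else 0))"
      by (intro sum.cong refl) (auto simp: mnm_def)
    also have "\<dots> = ?G a b c d" using delta4[OF assms] .
    finally show ?thesis unfolding mnm_def using True by auto
  next
    case False
    thus ?thesis unfolding dmul_def mnm_def by auto
  qed
qed


lemma sum_fun_app: "(\<Sum>x\<in>A. (F x :: delt)) i j = (\<Sum>x\<in>A. F x i j)"
  by (induct A rule: infinite_finite_induct) auto

definition W :: "nat \<Rightarrow> nat \<Rightarrow> nat \<Rightarrow> nat \<Rightarrow> nat \<Rightarrow> nat \<Rightarrow> complex" where
  "W i j a b c d = (if (a + c) mod 3 = i \<and> (b + d) mod 3 = j then eps ^ (b * c) * 2 ^ ((a + c) div 3 + (b + d) div 3) else 0)"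

lemma dmul_alt: "dmul f g = (\<lambda>i j. if i < 3 \<and> j < 3 then
   (\<Sum>a<3. \<Sum>b<3. \<Sum>c<3. \<Sum>d<3. W i j a b c d * (f a b * g c d)) else 0)"
  unfolding dmul_def W_def by (intro ext) (auto intro!: sum.cong)

lemma decomp: assumes "supp f" shows "f = (\<Sum>a<3. \<Sum>b<3. mnm (f a b) a b)"
proof (intro ext)
  fix i j
  have "(\<Sum>a<3. \<Sum>b<3. mnm (f a b) a b) i j = (\<Sum>a<3. \<Sum>b<3. if b = j then (if a = i then f a b else 0) else 0)"
    by (simp add: sum_fun_app mnm_def) (intro sum.cong refl, auto)
  also have "\<dots> = f i j" using assms unfolding supp_def by (cases "j < 3") (auto simp: sum.delta)
  finally show "f i j = (\<Sum>a<3. \<Sum>b<3. mnm (f a b) a b) i j" by simp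
qed

lemma dmul_add_left: "dmul (f + g) h = dmul f h + dmul g h"
  unfolding dmul_alt by (simp add: fun_eq_iff distrib_right distrib_left sum.distrib)

lemma dmul_add_right: "dmul h (f + g) = dmul h f + dmul h g"
  unfolding dmul_alt by (simp add: fun_eq_iff distrib_right distrib_left sum.distrib)

lemma dmul_zero_left: "dmul 0 h = 0"
  unfolding dmul_alt by (simp add: fun_eq_iff)

lemma dmul_zero_right: "dmul h 0 = 0"
  unfolding dmul_alt by (simp add: fun_eq_iff)

lemma dmul_scale_left: "dmul (\<lambda>i j. c * f i j) g = (\<lambda>i j. c * dmul f g i j)"
  unfolding dmul_alt by (simp add: fun_eq_iff sum_distrib_left mult.assoc mult.left_commute)

lemma dmul_scale_right: "dmul g (\<lambda>i j. c * f i j) = (\<lambda>i j. c * dmul g f i j)"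
  unfolding dmul_alt by (simp add: fun_eq_iff sum_distrib_left mult.left_commute)

lemma dmul_sum_left: "dmul (\<Sum>x\<in>A. F x) g = (\<Sum>x\<in>A. dmul (F x) g)"
  using sum_comp_morphism[of "\<lambda>f. dmul f g" F A] dmul_zero_left dmul_add_left by (simp add: o_def)

lemma dmul_sum_right: "dmul g (\<Sum>x\<in>A. F x) = (\<Sum>x\<in>A. dmul g (F x))"
  using sum_comp_morphism[of "\<lambda>f. dmul g f" F A] dmul_zero_right dmul_add_right by (simp add: o_def)

lemma lt3_cases: "(n::nat) < 3 \<Longrightarrow> n = 0 \<or> n = 1 \<or> n = 2" by auto

lemma div3_lemma: "(a::nat) < 3 \<Longrightarrow> c < 3 \<Longrightarrow> e < 3 \<Longrightarrow>
   (a + c) div 3 + ((a + c) mod 3 + e) div 3 = (c + e) div 3 + (a + (c + e) mod 3) div 3"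
  by (elim lt3_cases[elim_format] disjE) simp_all

lemma mod3_assoc: "(((a::nat) + c) mod 3 + e) mod 3 = (a + (c + e) mod 3) mod 3"
  by (simp add: mod_add_eq mod_add_left_eq mod_add_right_eq add.assoc)

lemma ep_lemma: "(b::nat) < 3 \<Longrightarrow> c < 3 \<Longrightarrow> d < 3 \<Longrightarrow> e < 3 \<Longrightarrow>
  (b * c + ((b + d) mod 3) * e) mod 3 = (d * e + b * ((c + e) mod 3)) mod 3"
  by (elim lt3_cases[elim_format] disjE) simp_all

lemma mono_assoc:
  assumes "a < 3" "b < 3" "c < 3" "d < 3" "e < 3" "r < 3"
  shows "dmul (dmul (mnm x a b) (mnm y c d)) (mnm z e r) = dmul (mnm x a b) (dmul (mnm y c d) (mnm z e r))"
proof -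
  have ep: "eps ^ (b * c) * eps ^ (((b + d) mod 3) * e) = eps ^ (d * e) * eps ^ (b * ((c + e) mod 3))"
    unfolding power_add[symmetric] by (rule eps_pow_cong) (rule ep_lemma[OF assms(2-5)])
  have t: "(2::complex) ^ ((a + c) div 3 + (b + d) div 3) * 2 ^ (((a + c) mod 3 + e) div 3 + ((b + d) mod 3 + r) div 3)
     = 2 ^ ((c + e) div 3 + (d + r) div 3) * 2 ^ ((a + (c + e) mod 3) div 3 + (b + (d + r) mod 3) div 3)"
    unfolding power_add[symmetric] by (rule arg_cong[of _ _ "\<lambda>n. (2::complex)^n"]) (use div3_lemma[OF assms(1,3,5)] div3_lemma[OF assms(2,4,6)] in linarith)
  have co: "x * y * eps ^ (b * c) * 2 ^ ((a + c) div 3 + (b + d) div 3) * z * eps ^ (((b + d) mod 3) * e) * 2 ^ (((a + c) mod 3 + e) div 3 + ((b + d) mod 3 + r) div 3)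
     = x * (y * z * eps ^ (d * e) * 2 ^ ((c + e) div 3 + (d + r) div 3)) * eps ^ (b * ((c + e) mod 3)) * 2 ^ ((a + (c + e) mod 3) div 3 + (b + (d + r) mod 3) div 3)"
  proof -
    have "?thesis \<longleftrightarrow> x * y * z * ((eps ^ (b * c) * eps ^ (((b + d) mod 3) * e)) * ((2::complex) ^ ((a + c) div 3 + (b + d) div 3) * 2 ^ (((a + c) mod 3 + e) div 3 + ((b + d) mod 3 + r) div 3)))
     = x * y * z * ((eps ^ (d * e) * eps ^ (b * ((c + e) mod 3))) * (2 ^ ((c + e) div 3 + (d + r) div 3) * 2 ^ ((a + (c + e) mod 3) div 3 + (b + (d + r) mod 3) div 3)))"
      by (simp only: mult_ac)
    thus ?thesis using ep t by simp
  qed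
  show ?thesis using assms
    by (simp add: dmul_mono co mod3_assoc)
qed

lemma dmul_decomp_right: assumes "supp g"
  shows "dmul uu g = (\<Sum>c<3. \<Sum>d<3. dmul uu (mnm (g c d) c d))"
proof -
  have "dmul uu g = dmul uu (\<Sum>c<3. \<Sum>d<3. mnm (g c d) c d)" using decomp[OF assms] by metis
  thus ?thesis by (simp only: dmul_sum_right)
qed

lemma dmul_decomp_left: assumes "supp g"
  shows "dmul g uu = (\<Sum>c<3. \<Sum>d<3. dmul (mnm (g c d) c d) uu)"
proof -
  have "dmul g uu = dmul (\<Sum>c<3. \<Sum>d<3. mnm (g c d) c d) uu" using decomp[OF assms] by metis
  thus ?thesis by (simp only: dmul_sum_left)
qed

lemma dmul_assoc:
  assumes "supp f" "supp g" "supp h"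
  shows "dmul (dmul f g) h = dmul f (dmul g h)"
proof -
  let ?F = "\<lambda>a b. mnm (f a b) a b" and ?G = "\<lambda>a b. mnm (g a b) a b" and ?H = "\<lambda>a b. mnm (h a b) a b"
  have fg: "dmul f g = (\<Sum>a<3. \<Sum>b<3. \<Sum>c<3. \<Sum>d<3. dmul (?F a b) (?G c d))"
    by (subst dmul_decomp_left[OF assms(1)], subst dmul_decomp_right[OF assms(2)]) (rule refl)
  have "dmul (dmul f g) h = (\<Sum>a<3. \<Sum>b<3. \<Sum>c<3. \<Sum>d<3. dmul (dmul (?F a b) (?G c d)) h)"
    unfolding fg by (simp only: dmul_sum_left)
  also have "\<dots> = (\<Sum>a<3. \<Sum>b<3. \<Sum>c<3. \<Sum>d<3. \<Sum>e<3. \<Sum>r<3. dmul (dmul (?F a b) (?G c d)) (?H e r))"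
    by (subst dmul_decomp_right[OF assms(3)]) (rule refl)
  also have "\<dots> = (\<Sum>a<3. \<Sum>b<3. \<Sum>c<3. \<Sum>d<3. \<Sum>e<3. \<Sum>r<3. dmul (?F a b) (dmul (?G c d) (?H e r)))"
    by (intro sum.cong refl) (simp add: mono_assoc)
  also have "\<dots> = (\<Sum>a<3. \<Sum>b<3. dmul (?F a b) (\<Sum>c<3. \<Sum>d<3. \<Sum>e<3. \<Sum>r<3. dmul (?G c d) (?H e r)))"
    by (simp only: dmul_sum_right)
  also have "(\<Sum>c<3. \<Sum>d<3. \<Sum>e<3. \<Sum>r<3. dmul (?G c d) (?H e r)) = dmul g h"
    apply (rule sym)
    by (subst dmul_decomp_left[OF assms(2)], subst dmul_decomp_right[OF assms(3)]) (rule refl)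
  also have "(\<Sum>a<3. \<Sum>b<3. dmul (?F a b) (dmul g h)) = dmul f (dmul g h)"
    by (rule dmul_decomp_left[OF assms(1), symmetric])
  finally show ?thesis .
qed


lemma D_simps[simp]: "carrier D = Dcar" "monoid.mult D = dmul" "one D = done_D" "ring.zero D = dzero" "ring.add D = dadd"
  by (simp_all add: D_def)

lemma dadd_eq: "dadd f g = f + g" by (simp add: dadd_def fun_eq_iff)
lemma dzero_eq: "dzero = 0" by (simp add: dzero_def fun_eq_iff)
lemma done_eq: "done_D = mnm 1 0 0" by (simp add: done_D_def mnm_def fun_eq_iff)
lemma sc_eq: "sc c = mnm c 0 0" by (simp add: sc_def mnm_def fun_eq_iff)
lemma gx_eq: "gx = mnm 1 1 0" by (simp add: gx_def mnm_def fun_eq_iff)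
lemma gy_eq: "gy = mnm 1 0 1" by (simp add: gy_def mnm_def fun_eq_iff)

lemma Dcar_iff: "f \<in> Dcar \<longleftrightarrow> supp f \<and> (\<forall>i j. f i j \<in> Qeps)"
  by (auto simp: Dcar_def supp_def)

lemma supp_dmul[simp]: "supp (dmul f g)"
  by (simp add: supp_def dmul_def)

lemma dmul_Qeps: "(\<And>i j. f i j \<in> Qeps) \<Longrightarrow> (\<And>i j. g i j \<in> Qeps) \<Longrightarrow> dmul f g i j \<in> Qeps"
  unfolding dmul_def by auto

lemma dmul_closed: "f \<in> Dcar \<Longrightarrow> g \<in> Dcar \<Longrightarrow> dmul f g \<in> Dcar"
  using dmul_Qeps by (auto simp: Dcar_iff)

lemma supp_mono[simp]: "a < 3 \<Longrightarrow> b < 3 \<Longrightarrow> supp (mnm x a b)"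
  by (auto simp: supp_def mnm_def)

lemma supp_add[simp]: "supp f \<Longrightarrow> supp g \<Longrightarrow> supp (f + g)"
  by (auto simp: supp_def)

lemma supp_sum[simp]: "(\<And>x. x \<in> A \<Longrightarrow> supp (F x)) \<Longrightarrow> supp (\<Sum>x\<in>A. F x)"
  by (induct A rule: infinite_finite_induct) (auto simp: supp_def)

lemma mono_Dcar[simp]: "a < 3 \<Longrightarrow> b < 3 \<Longrightarrow> x \<in> Qeps \<Longrightarrow> mnm x a b \<in> Dcar"
  by (auto simp: Dcar_iff) (auto simp: mnm_def)

lemma dmul_one_left: assumes "supp f" shows "dmul (mnm 1 0 0) f = f"
proof -
  have "dmul (mnm 1 0 0) f = (\<Sum>c<3. \<Sum>d<3. dmul (mnm 1 0 0) (mnm (f c d) c d))"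
    by (rule dmul_decomp_right[OF assms])
  also have "\<dots> = (\<Sum>c<3. \<Sum>d<3. mnm (f c d) c d)"
    by (intro sum.cong refl) (simp add: dmul_mono)
  finally show ?thesis using decomp[OF assms] by simp
qed

lemma dmul_one_right: assumes "supp f" shows "dmul f (mnm 1 0 0) = f"
proof -
  have "dmul f (mnm 1 0 0) = (\<Sum>c<3. \<Sum>d<3. dmul (mnm (f c d) c d) (mnm 1 0 0))"
    by (rule dmul_decomp_left[OF assms])
  also have "\<dots> = (\<Sum>c<3. \<Sum>d<3. mnm (f c d) c d)"
    by (intro sum.cong refl) (simp add: dmul_mono)
  finally show ?thesis using decomp[OF assms] by simp
qed

lemma ring_D: "ring D"
proof (rule ringI)
  show "abelian_group D"
  proof (rule abelian_groupI)
    fix x assume "x \<in> carrier D"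
    thus "\<exists>y\<in>carrier D. y \<oplus>\<^bsub>D\<^esub> x = \<zero>\<^bsub>D\<^esub>"
      by (intro bexI[of _ "- x"]) (auto simp: Dcar_def dadd_eq dzero_eq)
  qed (auto simp: Dcar_def dadd_eq dzero_eq)
  show "monoid D"
    by (rule monoidI) (auto simp: dmul_closed done_eq Dcar_iff dmul_assoc dmul_one_left dmul_one_right dmul_Qeps, auto simp: mnm_def)
qed (auto simp: dadd_eq dmul_add_left dmul_add_right)

lemma a_inv_D: "f \<in> Dcar \<Longrightarrow> \<ominus>\<^bsub>D\<^esub> f = - f"
proof -
  assume f: "f \<in> Dcar"
  interpret ring D by (rule ring_D)
  have "- f \<in> carrier D" using f by (auto simp: Dcar_def)
  moreover have "f \<oplus>\<^bsub>D\<^esub> - f = \<zero>\<^bsub>D\<^esub>" by (simp add: dadd_eq dzero_eq)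
  ultimately show ?thesis using f by (metis D_simps(1) add.inv_equality add.m_comm r_neg)
qed


lemma dstar_add: "dstar (f + g) = dstar f + dstar g"
  by (simp add: dstar_def fun_eq_iff algebra_simps)
lemma dstar_zero: "dstar 0 = 0"
  by (simp add: dstar_def fun_eq_iff)
lemma dstar_sum: "dstar (\<Sum>x\<in>A. F x) = (\<Sum>x\<in>A. dstar (F x))"
  using sum_comp_morphism[of dstar F A] dstar_zero dstar_add by (simp add: o_def)
lemma dstar_mono: "dstar (mnm x a b) = mnm (cnj x * eps ^ (a * b)) a b"
  by (simp add: dstar_def mnm_def fun_eq_iff)
lemma cnj_eps_pow: "cnj (eps ^ n) = eps ^ (2 * n)"
  by (simp add: cnj_eps power_mult)
lemma eps_cnj_mult: "cnj eps * eps = 1"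
proof -
  have "cnj eps * eps = eps ^ 3" by (simp add: cnj_eps power3_eq_cube power2_eq_square)
  thus ?thesis by (simp add: eps_cube)
qed
lemma dstar_dstar: "dstar (dstar f) = f"
proof -
  have "\<And>n. cnj (eps ^ n) * eps ^ n = 1"
    by (metis complex_cnj_power eps_cnj_mult power_mult_distrib power_one)
  thus ?thesis by (simp add: dstar_def fun_eq_iff mult.assoc)
qed
lemma supp_dstar[simp]: "supp f \<Longrightarrow> supp (dstar f)"
  by (simp add: supp_def dstar_def)
lemma dstar_Dcar: "f \<in> Dcar \<Longrightarrow> dstar f \<in> Dcar"
  by (auto simp: Dcar_iff) (simp add: dstar_def)

lemma exp_lemma2: "(a::nat) < 3 \<Longrightarrow> b < 3 \<Longrightarrow> c < 3 \<Longrightarrow> d < 3 \<Longrightarrow>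
  (2 * (b * c) + ((a + c) mod 3) * ((b + d) mod 3)) mod 3 = (c * d + a * b + d * a) mod 3"
  by (elim lt3_cases[elim_format] disjE) simp_all

lemma dstar_mono_mult:
  assumes "a < 3" "b < 3" "c < 3" "d < 3"
  shows "dstar (dmul (mnm x a b) (mnm y c d)) = dmul (dstar (mnm y c d)) (dstar (mnm x a b))"
proof -
  have e: "eps ^ (2 * (b * c)) * eps ^ (((a + c) mod 3) * ((b + d) mod 3)) = eps ^ (c * d) * eps ^ (a * b) * eps ^ (d * a)"
    unfolding power_add[symmetric] by (rule eps_pow_cong) (rule exp_lemma2[OF assms])
  have key: "cnj x * cnj y * eps ^ (2 * (b * c)) * 2 ^ ((a + c) div 3 + (b + d) div 3) * eps ^ (((a + c) mod 3) * ((b + d) mod 3))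
     = cnj y * eps ^ (c * d) * (cnj x * eps ^ (a * b)) * eps ^ (d * a) * 2 ^ ((a + c) div 3 + (b + d) div 3)"
  proof -
    have "cnj x * cnj y * eps ^ (2 * (b * c)) * 2 ^ ((a + c) div 3 + (b + d) div 3) * eps ^ (((a + c) mod 3) * ((b + d) mod 3))
      = cnj x * cnj y * 2 ^ ((a + c) div 3 + (b + d) div 3) * (eps ^ (2 * (b * c)) * eps ^ (((a + c) mod 3) * ((b + d) mod 3)))"
      by (simp only: mult_ac)
    also have "\<dots> = cnj x * cnj y * 2 ^ ((a + c) div 3 + (b + d) div 3) * (eps ^ (c * d) * eps ^ (a * b) * eps ^ (d * a))"
      by (simp only: e)
    also have "\<dots> = cnj y * eps ^ (c * d) * (cnj x * eps ^ (a * b)) * eps ^ (d * a) * 2 ^ ((a + c) div 3 + (b + d) div 3)"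
      by (simp only: mult_ac)
    finally show ?thesis .
  qed
  show ?thesis using assms apply (simp add: dmul_mono dstar_mono cnj_eps add.commute flip: power_mult)
    using key by (simp only:)
qed

lemma dstar_dmul:
  assumes "supp f" "supp g"
  shows "dstar (dmul f g) = dmul (dstar g) (dstar f)"
proof -
  let ?F = "\<lambda>a b. mnm (f a b) a b" and ?G = "\<lambda>a b. mnm (g a b) a b"
  have "dmul f g = (\<Sum>a<3. \<Sum>b<3. \<Sum>c<3. \<Sum>d<3. dmul (?F a b) (?G c d))"
    by (subst dmul_decomp_left[OF assms(1)], subst dmul_decomp_right[OF assms(2)]) (rule refl)
  hence "dstar (dmul f g) = (\<Sum>a<3. \<Sum>b<3. \<Sum>c<3. \<Sum>d<3. dstar (dmul (?F a b) (?G c d)))"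
    by (simp only: dstar_sum)
  also have "\<dots> = (\<Sum>a<3. \<Sum>b<3. \<Sum>c<3. \<Sum>d<3. dmul (dstar (?G c d)) (dstar (?F a b)))"
    by (intro sum.cong refl) (simp add: dstar_mono_mult)
  also have "\<dots> = (\<Sum>a<3. \<Sum>b<3. dmul (dstar g) (dstar (?F a b)))"
  proof (intro sum.cong refl)
    fix a b
    have "dstar g = (\<Sum>c<3. \<Sum>d<3. dstar (?G c d))"
      by (subst decomp[OF assms(2)]) (simp only: dstar_sum)
    thus "(\<Sum>c<3. \<Sum>d<3. dmul (dstar (?G c d)) (dstar (?F a b))) = dmul (dstar g) (dstar (?F a b))"
      by (simp only: dmul_sum_left)
  qed
  also have "\<dots> = dmul (dstar g) (dstar f)"
  proof -
    have "dstar f = (\<Sum>a<3. \<Sum>b<3. dstar (?F a b))"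
      by (subst decomp[OF assms(1)]) (simp only: dstar_sum)
    thus ?thesis by (simp only: dmul_sum_right)
  qed
  finally show ?thesis .
qed


lemma mono_add_same: "mnm x a b + mnm y a b = mnm (x + y) a b"
  by (simp add: mnm_def fun_eq_iff)

lemma neg_mono: "- mnm x a b = mnm (- x) a b"
  by (simp add: mnm_def fun_eq_iff)

lemma mono_zero: "mnm 0 a b = 0"
  by (simp add: mnm_def fun_eq_iff)

lemma d1_eq: "d1 = mnm (eps^2) 1 0 + mnm 1 2 0 + mnm 2 0 1"
  unfolding d1_def by (simp add: sc_eq gx_eq gy_eq dadd_eq dmul_mono inverse_eps, simp add: numeral_2_eq_2)

lemma d2_eq: "d2 = mnm 1 0 0 + mnm (- (eps^2)) 1 1 + mnm (- 1) 2 2"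
  unfolding d2_def a_minus_def
  by (simp add: sc_eq gx_eq gy_eq dadd_eq dmul_mono inverse_eps a_inv_D done_eq neg_mono, simp add: numeral_2_eq_2)

lemma d3_eq: "d3 = mnm 2 1 0 + mnm (- 1) 2 0 + mnm 1 1 2"
  unfolding d3_def a_minus_def
  by (simp add: sc_eq gx_eq gy_eq dadd_eq dmul_mono inverse_eps a_inv_D done_eq neg_mono, simp add: numeral_2_eq_2)

lemma d4_eq: "d4 = mnm 3 0 0 + mnm (- 1) 1 0 + mnm (- 1) 2 0"
  unfolding d4_def a_minus_def
  by (simp add: sc_eq gx_eq gy_eq dadd_eq dmul_mono inverse_eps a_inv_D done_eq neg_mono, simp add: numeral_2_eq_2)

lemma cases3: "(i::nat) = 0 \<or> i = 1 \<or> i = 2 \<or> 3 \<le> i" by auto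

lemma eps_facts: "cnj eps = -1 - eps" "eps^2 = -1 - eps" "eps^3 = 1" "eps^4 = eps" "eps^5 = -1 - eps"
   "eps^6 = 1" "eps^7 = eps" "eps^8 = -1 - eps"
  using cnj_eps eps_sq eps_cube eps_pow_mod[of 4] eps_pow_mod[of 5] eps_pow_mod[of 6] eps_pow_mod[of 7] eps_pow_mod[of 8]
  by auto

lemma eps_red: "eps * eps = -1 - eps" "eps * (eps * x) = - x - eps * x"
  using eps_sq by (auto simp: power2_eq_square algebra_simps) (metis mult.assoc mult_minus_left minus_diff_eq diff_conv_add_uminus distrib_right mult_1)

lemma sum_zero: "dmul (dstar d1) d1 + dmul (dstar d2) d2 + dmul (dstar d3) d3 + dmul (dstar d4) d4 = 0"
proof (intro ext)
  fix i j
  show "(dmul (dstar d1) d1 + dmul (dstar d2) d2 + dmul (dstar d3) d3 + dmul (dstar d4) d4) i j = 0 i j"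
    unfolding d1_eq d2_eq d3_eq d4_eq
    apply (simp add: dstar_add dstar_mono dmul_add_left dmul_add_right dmul_mono)
    using cases3[of i] cases3[of j] apply (elim disjE)
    apply (simp_all add: mnm_def eps_facts)
    apply (simp_all add: power2_eq_square algebra_simps eps_red)
    done
qed

lemma val00:
  "dmul (dstar d1) d1 0 0 = -2" "dmul (dstar d2) d2 0 0 = -3" "dmul (dstar d3) d3 0 0 = -8" "dmul (dstar d4) d4 0 0 = 13"
  unfolding d1_eq d2_eq d3_eq d4_eq
  apply (simp_all only: dstar_add dstar_mono dmul_add_left dmul_add_right)
  apply (simp_all add: dmul_mono)
  apply (simp_all add: mnm_def eps_facts)
  apply (simp_all add: power2_eq_square algebra_simps eps_red)
  done

lemma nz00: "(f::delt) 0 0 = c \<Longrightarrow> c \<noteq> 0 \<Longrightarrow> f \<noteq> 0" by auto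

lemma dk_nz: "dmul (dstar d1) d1 \<noteq> 0" "dmul (dstar d2) d2 \<noteq> 0" "dmul (dstar d3) d3 \<noteq> 0" "dmul (dstar d4) d4 \<noteq> 0"
  using nz00[of "dmul (dstar d1) d1", OF val00(1)] nz00[of "dmul (dstar d2) d2", OF val00(2)]
    nz00[of "dmul (dstar d3) d3", OF val00(3)] nz00[of "dmul (dstar d4) d4", OF val00(4)] by simp_all

lemma Dcar_add[simp]: "f \<in> Dcar \<Longrightarrow> g \<in> Dcar \<Longrightarrow> f + g \<in> Dcar"
  by (auto simp: Dcar_iff)

lemma dk_Dcar: "d1 \<in> Dcar" "d2 \<in> Dcar" "d3 \<in> Dcar" "d4 \<in> Dcar"
  unfolding d1_eq d2_eq d3_eq d4_eq by simp_all


lemma conj3: "dstar d1 \<otimes>\<^bsub>D\<^esub> d1 \<oplus>\<^bsub>D\<^esub> dstar d2 \<otimes>\<^bsub>D\<^esub> d2 \<oplus>\<^bsub>D\<^esub> dstar d3 \<otimes>\<^bsub>D\<^esub> d3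
        \<oplus>\<^bsub>D\<^esub> dstar d4 \<otimes>\<^bsub>D\<^esub> d4 = \<zero>\<^bsub>D\<^esub>"
  by (simp add: dadd_eq dzero_eq sum_zero)

lemma finsum_D_Suc: "F \<in> {..<Suc n} \<rightarrow> Dcar \<Longrightarrow> finsum D F {..<Suc n} = F n + finsum D F {..<n}"
proof -
  assume F: "F \<in> {..<Suc n} \<rightarrow> Dcar"
  interpret ring D by (rule ring_D)
  have "finsum D F (insert n {..<n}) = F n \<oplus>\<^bsub>D\<^esub> finsum D F {..<n}"
    by (rule finsum_insert) (use F in auto)
  thus ?thesis by (simp add: lessThan_Suc dadd_eq)
qed

lemma finsum_D_0: "finsum D F {} = 0"
proof -
  interpret ring D by (rule ring_D)
  show ?thesis using finsum_empty[of F] by (simp add: dzero_eq)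
qed

lemma conj2: "\<not> formally_real_D (carrier D)"
proof -
  define dd where "dd = (\<lambda>i::nat. if i = 0 then d1 else if i = 1 then d2 else if i = 2 then d3 else d4)"
  define r where "r = (\<lambda>i. dstar (dd i))"
  have rc: "\<And>i. r i \<in> Dcar" unfolding r_def dd_def using dk_Dcar by (auto intro: dstar_Dcar)
  have rr: "\<And>i. dmul (r i) (dstar (r i)) = dmul (dstar (dd i)) (dd i)" unfolding r_def by (simp add: dstar_dstar)
  have nz: "\<forall>i<4. r i \<in> carrier D \<and> r i \<otimes>\<^bsub>D\<^esub> dstar (r i) \<noteq> \<zero>\<^bsub>D\<^esub>"
    using rc dk_nz by (auto simp: dzero_eq dd_def rr)
  have cl: "\<And>n. (\<lambda>i. r i \<otimes>\<^bsub>D\<^esub> dstar (r i)) \<in> {..<n} \<rightarrow> Dcar"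
    using rc by (simp add: dmul_closed dstar_Dcar)
  have "finsum D (\<lambda>i. r i \<otimes>\<^bsub>D\<^esub> dstar (r i)) {..<4} = 0"
    using finsum_D_Suc[OF cl, of 3] finsum_D_Suc[OF cl, of 2] finsum_D_Suc[OF cl, of 1] finsum_D_Suc[OF cl, of 0]
      finsum_D_0[of "\<lambda>i. dmul (r i) (dstar (r i))"] sum_zero
    by (simp add: rr dd_def eval_nat_numeral algebra_simps)
  thus ?thesis unfolding formally_real_D_def using nz
    by (auto intro!: exI[of _ 4] exI[of _ r] simp: dzero_eq)
qed


interpretation Dr: ring D by (rule ring_D)

definition Zs :: "delt set" where "Zs = {mnm c 0 0 | c. c \<in> Qeps}"

lemma mnm_eq_iff: "a < 3 \<Longrightarrow> b < 3 \<Longrightarrow> mnm x a b = mnm y a b \<longleftrightarrow> x = y"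
  by (auto simp: mnm_def fun_eq_iff)

lemma mnm_zero_iff: "mnm x a b = 0 \<longleftrightarrow> x = 0"
  by (auto simp: mnm_def fun_eq_iff)

lemma mnm_scale: "mnm c 0 0 = (\<lambda>i j. c * mnm 1 0 0 i j)"
  by (simp add: mnm_def fun_eq_iff)

lemma central_left: "supp f \<Longrightarrow> dmul (mnm c 0 0) f = (\<lambda>i j. c * f i j)"
  by (subst mnm_scale) (simp add: dmul_scale_left dmul_one_left)

lemma central_right: "supp f \<Longrightarrow> dmul f (mnm c 0 0) = (\<lambda>i j. c * f i j)"
  by (subst mnm_scale) (simp add: dmul_scale_right dmul_one_right)

lemma central: "f \<in> Dcar \<Longrightarrow> dmul (mnm c 0 0) f = dmul f (mnm c 0 0)"
  by (simp add: Dcar_iff central_left central_right)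

lemma Zs_sub: "Zs \<subseteq> Dcar" by (auto simp: Zs_def)

lemma subfield_Zs: "subfield Zs D"
proof (rule Dr.subfieldI)
  show "subcring Zs D"
  proof (rule Dr.subcringI)
    show "subring Zs D"
    proof (rule Dr.subringI)
      show "Zs \<subseteq> carrier D" using Zs_sub by simp
      show "\<one>\<^bsub>D\<^esub> \<in> Zs" by (auto simp: Zs_def done_eq)
      show "\<ominus>\<^bsub>D\<^esub> h \<in> Zs" if "h \<in> Zs" for h
        using that by (auto simp: Zs_def a_inv_D neg_mono)
      show "h1 \<otimes>\<^bsub>D\<^esub> h2 \<in> Zs" if "h1 \<in> Zs" "h2 \<in> Zs" for h1 h2
        using that by (auto simp: Zs_def dmul_mono)
      show "h1 \<oplus>\<^bsub>D\<^esub> h2 \<in> Zs" if "h1 \<in> Zs" "h2 \<in> Zs" for h1 h2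
        using that by (auto simp: Zs_def dadd_eq mono_add_same)
    qed
    show "h1 \<otimes>\<^bsub>D\<^esub> h2 = h2 \<otimes>\<^bsub>D\<^esub> h1" if "h1 \<in> Zs" "h2 \<in> Zs" for h1 h2
      using that by (auto simp: Zs_def dmul_mono mult.commute)
  qed
  show "Units (D\<lparr>carrier := Zs\<rparr>) = Zs - {\<zero>\<^bsub>D\<^esub>}"
  proof
    show "Units (D\<lparr>carrier := Zs\<rparr>) \<subseteq> Zs - {\<zero>\<^bsub>D\<^esub>}"
    proof
      fix u assume "u \<in> Units (D\<lparr>carrier := Zs\<rparr>)"
      then obtain v where "u \<in> Zs" "v \<in> Zs" "dmul v u = done_D" by (auto simp: Units_def)
      moreover have "done_D \<noteq> 0" by (simp add: done_eq mnm_zero_iff)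
      ultimately show "u \<in> Zs - {\<zero>\<^bsub>D\<^esub>}" by (auto simp: dzero_eq dmul_zero_right)
    qed
    show "Zs - {\<zero>\<^bsub>D\<^esub>} \<subseteq> Units (D\<lparr>carrier := Zs\<rparr>)"
    proof
      fix u assume "u \<in> Zs - {\<zero>\<^bsub>D\<^esub>}"
      then obtain c where c: "c \<in> Qeps" "c \<noteq> 0" "u = mnm c 0 0" by (auto simp: Zs_def dzero_eq mnm_zero_iff)
      have i: "mnm (inverse c) 0 0 \<in> Zs" using c by (auto simp: Zs_def)
      have u: "u \<in> Zs" using c by (auto simp: Zs_def)
      have "dmul (mnm (inverse c) 0 0) u = done_D" "dmul u (mnm (inverse c) 0 0) = done_D"
        using c by (simp_all add: dmul_mono done_eq)
      thus "u \<in> Units (D\<lparr>carrier := Zs\<rparr>)" using i u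
        unfolding Units_def by auto
    qed
  qed
qed

lemma gx_notin: "gx \<notin> Zs"
  by (auto simp: Zs_def gx_eq mnm_def fun_eq_iff)

lemma gx_comm_Zs: "z \<in> Zs \<Longrightarrow> dmul gx z = dmul z gx"
  by (auto simp: Zs_def gx_eq dmul_mono mult.commute)

lemma gx_gy_noncomm: "dmul gx gy \<noteq> dmul gy gx"
  using eps_ne1 by (simp add: gx_eq gy_eq dmul_mono mnm_eq_iff)

lemma gx_Dcar: "gx \<in> Dcar" and gy_Dcar: "gy \<in> Dcar" by (simp_all add: gx_eq gy_eq)


lemma Zs_mnm: "k \<in> Zs \<Longrightarrow> \<exists>c\<in>Qeps. k = mnm c 0 0" by (auto simp: Zs_def)

lemma combine_vanish:
  "set Us \<subseteq> Dcar \<Longrightarrow> set Ks \<subseteq> Zs \<Longrightarrow> (\<forall>u\<in>set Us. u i j = 0) \<Longrightarrow> Dr.combine Ks Us i j = 0"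
proof (induct Ks Us rule: Dr.combine.induct)
  case (1 k Ks u Us)
  then obtain c where c: "k = mnm c 0 0" by (auto simp: Zs_def)
  have "supp u" using 1 by (auto simp: Dcar_iff)
  thus ?case using 1 by (simp add: c central_left dadd_eq)
qed (auto simp: dzero_eq)

lemma span_vanish:
  assumes "set Us \<subseteq> Dcar" "\<forall>u\<in>set Us. u i j = 0" "v \<in> Dr.Span Zs Us"
  shows "v i j = 0"
  using assms combine_vanish Dr.Span_eq_combine_set[OF subfield_Zs, of Us] by auto

lemma indep_basis:
  "distinct ps \<Longrightarrow> (\<forall>(a,b)\<in>set ps. a < 3 \<and> b < 3) \<Longrightarrow> Dr.independent Zs (map (\<lambda>(a,b). mnm 1 a b) ps)"
proof (induct ps)
  case Nil thus ?case by simp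
next
  case (Cons p ps)
  obtain a b where p: "p = (a, b)" by fastforce
  have sub: "set (map (\<lambda>(a,b). mnm 1 a b) ps) \<subseteq> Dcar" using Cons by auto
  have van: "\<forall>u\<in>set (map (\<lambda>(a,b). mnm 1 a b) ps). u a b = 0"
    using Cons(2) p by (auto simp: mnm_def)
  have "mnm 1 a b \<notin> Dr.Span Zs (map (\<lambda>(a,b). mnm 1 a b) ps)"
  proof
    assume "mnm 1 a b \<in> Dr.Span Zs (map (\<lambda>(a,b). mnm 1 a b) ps)"
    from span_vanish[OF sub van this] show False by (simp add: mnm_def)
  qed
  moreover have "mnm 1 a b \<in> carrier D" using Cons(3) p by auto
  ultimately show ?case using Cons p by (auto intro!: Dr.li_Cons)
qed

lemma combine_basis:
  "(\<forall>(a,b)\<in>set ps. a < 3 \<and> b < 3) \<Longrightarrow> Dr.combine (map (\<lambda>(a,b). mnm (f a b) 0 0) ps) (map (\<lambda>(a,b). mnm 1 a b) ps)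
     = sum_list (map (\<lambda>(a,b). mnm (f a b) a b) ps)"
  by (induct ps) (auto simp: dzero_eq dadd_eq dmul_mono)

definition ps9 :: "(nat \<times> nat) list" where
  "ps9 = [(0,0),(0,1),(0,2),(1,0),(1,1),(1,2),(2,0),(2,1),(2,2)]"

lemma dim9: "Dr.dimension 9 Zs (carrier D)"
proof -
  have li: "Dr.independent Zs (map (\<lambda>(a,b). mnm 1 a b) ps9)"
    by (rule indep_basis) (auto simp: ps9_def)
  have sub: "set (map (\<lambda>(a,b). mnm 1 a b) ps9) \<subseteq> carrier D" by (auto simp: ps9_def)
  have "Dr.Span Zs (map (\<lambda>(a,b). mnm 1 a b) ps9) = carrier D"
  proof
    show "Dr.Span Zs (map (\<lambda>(a,b). mnm 1 a b) ps9) \<subseteq> carrier D"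
      using Dr.Span_in_carrier[OF _ sub] Zs_sub by simp
    show "carrier D \<subseteq> Dr.Span Zs (map (\<lambda>(a,b). mnm 1 a b) ps9)"
    proof
      fix f assume "f \<in> carrier D"
      hence f: "supp f" "\<And>i j. f i j \<in> Qeps" by (auto simp: Dcar_iff)
      have "f = sum_list (map (\<lambda>(a,b). mnm (f a b) a b) ps9)"
        by (subst decomp[OF f(1)]) (simp add: ps9_def eval_nat_numeral add_ac)
      also have "\<dots> = Dr.combine (map (\<lambda>(a,b). mnm (f a b) 0 0) ps9) (map (\<lambda>(a,b). mnm 1 a b) ps9)"
        by (rule combine_basis[symmetric]) (auto simp: ps9_def)
      finally have fe: "f = Dr.combine (map (\<lambda>(a,b). mnm (f a b) 0 0) ps9) (map (\<lambda>(a,b). mnm 1 a b) ps9)" .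
      have "set (map (\<lambda>(a,b). mnm (f a b) 0 0) ps9) \<subseteq> Zs" using f(2) by (auto simp: Zs_def ps9_def)
      thus "f \<in> Dr.Span Zs (map (\<lambda>(a,b). mnm 1 a b) ps9)"
        unfolding Dr.Span_eq_combine_set[OF subfield_Zs sub] using fe by blast
    qed
  qed
  moreover have "length (map (\<lambda>(a,b). mnm 1 a b) ps9) = 9" by (simp add: ps9_def)
  ultimately show ?thesis using Dr.dimensionI[OF subfield_Zs li] by metis
qed


lemma nm9: "(n::nat) * m = 9 \<Longrightarrow> n = 1 \<or> n = 3 \<or> n = 9"
proof -
  assume h: "n * m = 9"
  hence "n dvd 9" by (metis dvd_triv_left)
  hence "n \<le> 9" by (simp add: dvd_imp_le)
  hence "n = 0 \<or> n = 1 \<or> n = 2 \<or> n = 3 \<or> n = 4 \<or> n = 5 \<or> n = 6 \<or> n = 7 \<or> n = 8 \<or> n = 9" by presburger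
  thus ?thesis using h by (elim disjE; auto; presburger)
qed

lemma one_indep: "subfield F D \<Longrightarrow> Dr.independent F [\<one>\<^bsub>D\<^esub>]"
  by (rule Dr.li_Cons) (auto simp: done_eq dzero_eq mnm_zero_iff)

lemma dim1_sub:
  assumes F: "subfield F D" and d: "Dr.dimension 1 F E" and one: "\<one>\<^bsub>D\<^esub> \<in> E"
  shows "E \<subseteq> F"
proof -
  obtain Vs where Vs: "length (Vs @ [\<one>\<^bsub>D\<^esub>]) = 1" "Dr.Span F (Vs @ [\<one>\<^bsub>D\<^esub>]) = E"
    using Dr.complete_base[OF F d one_indep[OF F]] one by auto
  hence E: "E = Dr.Span F [\<one>\<^bsub>D\<^esub>]" by simp
  have "Dr.Span F [\<one>\<^bsub>D\<^esub>] \<subseteq> F"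
  proof
    fix v assume "v \<in> Dr.Span F [\<one>\<^bsub>D\<^esub>]"
    moreover have oc: "set [\<one>\<^bsub>D\<^esub>] \<subseteq> carrier D" by (simp add: done_eq)
    ultimately obtain Ks where Ks: "v = Dr.combine Ks [\<one>\<^bsub>D\<^esub>]" "set Ks \<subseteq> F"
      using Dr.Span_eq_combine_set[OF F oc] by auto
    have sub: "F \<subseteq> carrier D" using subfieldE(3)[OF F] .
    show "v \<in> F"
    proof (cases Ks)
      case Nil thus ?thesis using Ks subfieldE(1)[OF F] subringE(2) by fastforce
    next
      case (Cons k Ks')
      hence "v = dadd (dmul k done_D) dzero" using Ks sub by auto
      moreover have "supp k" using Ks Cons sub by (auto simp: Dcar_iff)
      ultimately have "v = k" by (simp add: dadd_eq dzero_eq done_eq dmul_one_right)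
      thus ?thesis using Ks Cons by auto
    qed
  qed
  thus ?thesis using E by simp
qed

locale maxK =
  fixes K assumes K: "subfield K D" and C: "centralizer_D K = K"
begin

lemma K_sub: "K \<subseteq> Dcar" using subfieldE(3)[OF K] by simp
lemma K_one: "done_D \<in> K" using subringE(3)[OF subfieldE(1)[OF K]] by simp
lemma K_mult: "a \<in> K \<Longrightarrow> b \<in> K \<Longrightarrow> dmul a b \<in> K" using subringE(6)[OF subfieldE(1)[OF K]] by simp
lemma K_add: "a \<in> K \<Longrightarrow> b \<in> K \<Longrightarrow> a + b \<in> K" using subringE(7)[OF subfieldE(1)[OF K]] by (simp add: dadd_eq)

lemma Zs_sub_K: "Zs \<subseteq> K"
proof
  fix z assume z: "z \<in> Zs"
  have "z \<in> centralizer_D K"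
    using z K_sub Zs_sub by (auto simp: centralizer_D_def Zs_def central)
  thus "z \<in> K" using C by simp
qed

lemma K_not_sub_Zs: "\<not> K \<subseteq> Zs"
proof
  assume KZ: "K \<subseteq> Zs"
  have "gx \<in> centralizer_D K"
    using KZ gx_comm_Zs gx_Dcar by (auto simp: centralizer_D_def)
  thus False using C KZ gx_notin by auto
qed

lemma K_comm: "a \<in> K \<Longrightarrow> b \<in> K \<Longrightarrow> dmul a b = dmul b a"
  using subcring.sub_m_comm[OF subdomain.axioms(1)[OF subfield.axioms(1)[OF K]]] by simp

lemma K_not_carrier: "\<not> Dcar \<subseteq> K"
  using K_comm gx_Dcar gy_Dcar gx_gy_noncomm by auto

lemma dim3: "Dr.dimension 3 Zs K"
proof -
  have sa: "subalgebra Zs K D"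
  proof (rule subalgebra.intro)
    show "subgroup K (add_monoid D)"
      using subring.axioms(1)[OF subcring.axioms(1)[OF subdomain.axioms(1)[OF subfield.axioms(1)[OF K]]]] .
    show "subalgebra_axioms Zs K D"
      unfolding subalgebra_axioms_def using Zs_sub_K K_mult by auto
  qed
  have "Dr.finite_dimension Zs K"
    using Dr.subalbegra_incl_imp_finite_dimension[OF subfield_Zs Dr.finite_dimensionI[OF dim9] sa] K_sub by simp
  then obtain n where dn: "Dr.dimension n Zs K" by auto
  obtain Us where Us: "set Us \<subseteq> carrier D" "Dr.Span Zs Us = carrier D"
    using Dr.exists_base[OF subfield_Zs dim9] by blast
  have "Dr.Span K Us = carrier D"
  proof
    show "Dr.Span K Us \<subseteq> carrier D" using Dr.Span_in_carrier[OF _ Us(1)] K_sub by simp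
    show "carrier D \<subseteq> Dr.Span K Us"
      using Us Zs_sub_K unfolding Dr.Span_eq_combine_set[OF subfield_Zs Us(1)] Dr.Span_eq_combine_set[OF K Us(1)]
      by blast
  qed
  hence "Dr.finite_dimension K (carrier D)"
    using Dr.Span_finite_dimension[OF K Us(1)] by simp
  then obtain m where dm: "Dr.dimension m K (carrier D)" by auto
  have "Dr.dimension (n * m) Zs (carrier D)"
    by (rule Dr.telescopic_base[OF subfield_Zs K dn dm])
  hence nm: "n * m = 9" using Dr.dimension_is_inj[OF subfield_Zs _ dim9] by blast
  have "n \<noteq> 1"
  proof
    assume "n = 1"
    hence "K \<subseteq> Zs" using dim1_sub[OF subfield_Zs] dn K_one by auto
    thus False using K_not_sub_Zs by simp
  qed
  moreover have "n \<noteq> 9"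
  proof
    assume "n = 9"
    hence "m = 1" using nm by simp
    hence "carrier D \<subseteq> K" using dim1_sub[OF K] dm by (auto simp: done_eq)
    thus False using K_not_carrier by simp
  qed
  ultimately have "n = 3" using nm9[OF nm] by auto
  thus ?thesis using dn by simp
qed

end


lemma span_one_sub:
  assumes F: "subfield F D" shows "Dr.Span F [\<one>\<^bsub>D\<^esub>] \<subseteq> F"
proof
  fix v assume "v \<in> Dr.Span F [\<one>\<^bsub>D\<^esub>]"
  moreover have oc: "set [\<one>\<^bsub>D\<^esub>] \<subseteq> carrier D" by (simp add: done_eq)
  ultimately obtain Ks where Ks: "v = Dr.combine Ks [\<one>\<^bsub>D\<^esub>]" "set Ks \<subseteq> F"
    using Dr.Span_eq_combine_set[OF F oc] by auto
  have sub: "F \<subseteq> carrier D" using subfieldE(3)[OF F] .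
  show "v \<in> F"
  proof (cases Ks)
    case Nil thus ?thesis using Ks subfieldE(1)[OF F] subringE(2) by fastforce
  next
    case (Cons k Ks')
    hence "v = dadd (dmul k done_D) dzero" using Ks sub by auto
    moreover have "supp k" using Ks Cons sub by (auto simp: Dcar_iff)
    ultimately have "v = k" by (simp add: dadd_eq dzero_eq done_eq dmul_one_right)
    thus ?thesis using Ks Cons by auto
  qed
qed

lemma dstar_scale: "dstar (\<lambda>i j. c * g i j) = (\<lambda>i j. cnj c * dstar g i j)"
  by (simp add: dstar_def fun_eq_iff)

lemma eps_cnj_pow: "eps ^ n * cnj eps ^ n = 1"
  by (metis mult.commute eps_cnj_mult power_mult_distrib power_one)

definition sig :: complex where "sig = 2 * eps + 1"

lemma sig_Qeps: "sig \<in> Qeps" by (simp add: sig_def)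
lemma sig_nz: "sig \<noteq> 0"
proof
  assume "sig = 0"
  hence "Im sig = 0" by simp
  thus False by (simp add: sig_def Im_eps)
qed
lemma cnj_sig: "cnj sig = - sig"
  by (simp add: sig_def eps_facts)

sublocale maxK \<subseteq> KF: field "D\<lparr>carrier := K\<rparr>"
  by (rule Dr.subfield_iff(2)[OF K])

locale maxKs = maxK +
  assumes S: "dstar ` K \<subseteq> K"
begin

lemma K_neg: "a \<in> K \<Longrightarrow> - a \<in> K"
  using subringE(5)[OF subfieldE(1)[OF K]] K_sub a_inv_D by fastforce

lemma K_scale: "c \<in> Qeps \<Longrightarrow> a \<in> K \<Longrightarrow> (\<lambda>i j. c * a i j) \<in> K"
proof -
  assume c: "c \<in> Qeps" and a: "a \<in> K"
  have "dmul (mnm c 0 0) a \<in> K" using K_mult[OF _ a] Zs_sub_K c by (auto simp: Zs_def)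
  moreover have "supp a" using a K_sub by (auto simp: Dcar_iff)
  ultimately show ?thesis by (simp add: central_left)
qed

lemma herm_exists: "\<exists>h \<in> K. h \<notin> Zs \<and> dstar h = h"
proof -
  obtain k where k: "k \<in> K" "k \<notin> Zs" using K_not_sub_Zs by auto
  have k': "dstar k \<in> K" using S k by auto
  define p where "p = k + dstar k"
  define q where "q = (\<lambda>i j. sig * (k + - dstar k) i j)"
  have pK: "p \<in> K" unfolding p_def using k k' K_add by simp
  have "k + - dstar k \<in> K" using k K_add K_neg[OF k'] by blast
  hence qK: "q \<in> K" unfolding q_def by (rule K_scale[OF sig_Qeps])
  have pH: "dstar p = p" unfolding p_def by (simp add: dstar_add dstar_dstar add.commute)
  have qH: "dstar q = q" unfolding q_def dstar_scale
    by (simp add: dstar_def fun_eq_iff cnj_sig algebra_simps eps_cnj_pow)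
  show ?thesis
  proof (cases "p \<in> Zs")
    case False thus ?thesis using pK pH by auto
  next
    case True
    show ?thesis
    proof (cases "q \<in> Zs")
      case False thus ?thesis using qK qH by auto
    next
      case qZ: True
      obtain a b where ab: "a \<in> Qeps" "b \<in> Qeps" "p = mnm a 0 0" "q = mnm b 0 0"
        using True qZ by (auto simp: Zs_def)
      have "k = mnm (a / 2 + b / (2 * sig)) 0 0"
      proof (intro ext)
        fix i j
        have "p i j = k i j + dstar k i j" "q i j = sig * (k i j - dstar k i j)" by (simp_all add: p_def q_def)
        hence "k i j = p i j / 2 + q i j / (2 * sig)" using sig_nz by (simp add: field_simps)
        thus "k i j = mnm (a / 2 + b / (2 * sig)) 0 0 i j" using ab by (simp add: mnm_def add_divide_distrib)
      qed
      hence "k \<in> Zs" using ab sig_Qeps by (auto simp: Zs_def)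
      thus ?thesis using k by simp
    qed
  qed
qed

end


lemma nm3: "(n::nat) * m = 3 \<Longrightarrow> n = 1 \<or> n = 3"
proof -
  assume h: "n * m = 3"
  hence "n dvd 3" by (metis dvd_triv_left)
  hence "n \<le> 3" by (simp add: dvd_imp_le)
  hence "n = 0 \<or> n = 1 \<or> n = 2 \<or> n = 3" by presburger
  thus ?thesis using h by (elim disjE; auto; presburger)
qed

context maxKs
begin

lemma Ksubring: "subring K D" using subfieldE(1)[OF K] .

lemma Span_eq: "KF.Span = Dr.Span" using Dr.Span_consistent[OF Ksubring] .

lemma ZsKF: "subfield Zs (D\<lparr>carrier := K\<rparr>)"
proof (rule KF.subfield_iff(1))
  show "field (D\<lparr>carrier := K\<rparr>\<lparr>carrier := Zs\<rparr>)" using Dr.subfield_iff(2)[OF subfield_Zs] by simp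
  show "Zs \<subseteq> carrier (D\<lparr>carrier := K\<rparr>)" using Zs_sub_K by simp
qed

lemma indep_transfer: "set Us \<subseteq> K \<Longrightarrow> Dr.independent Zs Us \<Longrightarrow> KF.independent Zs Us"
proof (induct Us)
  case Nil thus ?case by simp
next
  case (Cons u Us)
  show ?case
  proof (rule KF.li_Cons)
    show "u \<in> carrier (D\<lparr>carrier := K\<rparr>)" using Cons by simp
    show "u \<notin> KF.Span Zs Us" using Dr.independent_backwards(1)[OF Cons(3)] Span_eq by simp
    show "KF.independent Zs Us" using Cons Dr.independent_backwards(2)[OF Cons(3)] by simp
  qed
qed

lemma dim3KF: "KF.dimension 3 Zs K"
proof -
  obtain Us where Us: "set Us \<subseteq> carrier D" "Dr.independent Zs Us" "length Us = 3" "Dr.Span Zs Us = K"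
    using Dr.exists_base[OF subfield_Zs dim3] by blast
  have "set Us \<subseteq> K" using Dr.Span_base_incl[OF subfield_Zs Us(1)] Us(4) by simp
  hence li: "KF.independent Zs Us" using indep_transfer Us(2) by simp
  show ?thesis using KF.dimensionI[OF ZsKF li] Us Span_eq by simp
qed

lemma supp_K: "k \<in> K \<Longrightarrow> supp k" using K_sub by (auto simp: Dcar_iff)

lemma basis_exists: "\<exists>h \<in> K. dstar h = h \<and> KF.independent Zs [dmul h h, h, done_D] \<and> KF.Span Zs [dmul h h, h, done_D] = K"
proof -
  obtain h where h: "h \<in> K" "h \<notin> Zs" "dstar h = h" using herm_exists by blast
  have hc: "h \<in> carrier (D\<lparr>carrier := K\<rparr>)" using h by simp
  have fd: "KF.finite_dimension Zs (carrier (D\<lparr>carrier := K\<rparr>))"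
    using KF.finite_dimensionI[OF dim3KF] by simp
  have alg: "(KF.algebraic over Zs) h"
    using KF.finite_dimension_imp_algebraic[OF ZsKF KF.carrier_is_subring fd hc] .
  define S where "S = KF.simple_extension Zs h"
  have sS: "subfield S (D\<lparr>carrier := K\<rparr>)"
    unfolding S_def using KF.simple_extension_is_subfield[OF ZsKF hc] alg by simp
  define d where "d = degree (KF.Irr Zs h)"
  have dd: "KF.dimension d Zs S" unfolding S_def d_def by (rule KF.dimension_simple_extension[OF ZsKF hc alg])
  have ZsS: "Zs \<subseteq> S" unfolding S_def using KF.simple_extension_incl[OF _ hc] Zs_sub_K by simp
  obtain Us where Us: "set Us \<subseteq> carrier (D\<lparr>carrier := K\<rparr>)" "KF.Span Zs Us = K"
    using KF.exists_base[OF ZsKF dim3KF] by blast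
  have "KF.Span S Us = K"
  proof
    show "KF.Span S Us \<subseteq> K" using KF.Span_in_carrier[OF _ Us(1)] subfieldE(3)[OF sS] by simp
    show "K \<subseteq> KF.Span S Us"
      using Us ZsS unfolding KF.Span_eq_combine_set[OF ZsKF Us(1)] KF.Span_eq_combine_set[OF sS Us(1)]
      by blast
  qed
  hence "KF.finite_dimension S K" using KF.Span_finite_dimension[OF sS Us(1)] by simp
  then obtain m where dm: "KF.dimension m S K" by auto
  have "KF.dimension (d * m) Zs K" by (rule KF.telescopic_base[OF ZsKF sS dd dm])
  hence "d * m = 3" using KF.dimension_is_inj[OF ZsKF _ dim3KF] by blast
  hence d13: "d = 1 \<or> d = 3" using nm3 by blast
  have eb: "KF.exp_base h d = (if d = 1 then [done_D] else [dmul h h, h, done_D])"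
    using d13 supp_K[OF h(1)] by (auto simp: KF.exp_base_def eval_nat_numeral done_eq dmul_one_left)
  have sp: "KF.Span Zs (KF.exp_base h d) = S"
    unfolding S_def d_def by (rule KF.Span_exp_base[OF ZsKF hc alg])
  have "d \<noteq> 1"
  proof
    assume "d = 1"
    hence "Dr.Span Zs [\<one>\<^bsub>D\<^esub>] = S" using sp eb Span_eq by simp
    moreover have "h \<in> S" unfolding S_def using KF.simple_extension_mem[OF subfieldE(1)[OF ZsKF] hc] .
    ultimately have "h \<in> Zs" using span_one_sub[OF subfield_Zs] by auto
    thus False using h by simp
  qed
  hence d3: "d = 3" using d13 by simp
  have li: "KF.independent Zs [dmul h h, h, done_D]"
    using KF.exp_base_independent[OF ZsKF hc alg] eb d3 unfolding d_def by simp
  have sub: "set [dmul h h, h, done_D] \<subseteq> K" using h K_mult K_one by auto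
  obtain Vs where Vs: "length (Vs @ [dmul h h, h, done_D]) = 3" "KF.Span Zs (Vs @ [dmul h h, h, done_D]) = K"
    using KF.complete_base[OF ZsKF dim3KF li] sub by auto
  hence "KF.Span Zs [dmul h h, h, done_D] = K" by simp
  thus ?thesis using h li by blast
qed

end


locale maxKh = maxKs +
  fixes h
  assumes hK: "h \<in> K" and hH: "dstar h = h"
    and li: "KF.independent Zs [dmul h h, h, done_D]" and sp: "KF.Span Zs [dmul h h, h, done_D] = K"
begin

definition lc :: "complex \<Rightarrow> complex \<Rightarrow> complex \<Rightarrow> delt" where
  "lc a b c = (\<lambda>i j. a * dmul h h i j + b * h i j + c * done_D i j)"

lemma supp_h: "supp h" using supp_K[OF hK] .
lemma supp_done: "supp done_D" by (simp add: done_eq)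

lemma H2K: "dmul h h \<in> K" using K_mult hK by simp

lemma combine3: "KF.combine [mnm a 0 0, mnm b 0 0, mnm c 0 0] [dmul h h, h, done_D] = lc a b c"
  by (simp add: lc_def central_left supp_h supp_done dadd_eq dzero_eq fun_eq_iff)

lemma lc_zero: "a \<in> Qeps \<Longrightarrow> b \<in> Qeps \<Longrightarrow> c \<in> Qeps \<Longrightarrow> lc a b c = 0 \<Longrightarrow> a = 0 \<and> b = 0 \<and> c = 0"
proof -
  assume abc: "a \<in> Qeps" "b \<in> Qeps" "c \<in> Qeps" "lc a b c = 0"
  have "set [mnm a 0 0, mnm b 0 0, mnm c 0 0] \<subseteq> Zs" using abc by (auto simp: Zs_def)
  moreover have "KF.combine [mnm a 0 0, mnm b 0 0, mnm c 0 0] [dmul h h, h, done_D] = \<zero>\<^bsub>D\<lparr>carrier := K\<rparr>\<^esub>"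
    using abc combine3 by (simp add: dzero_eq)
  ultimately have "set (take 3 [mnm a 0 0, mnm b 0 0, mnm c 0 0]) \<subseteq> {\<zero>\<^bsub>D\<lparr>carrier := K\<rparr>\<^esub>}"
    using KF.independent_imp_trivial_combine[OF ZsKF li] by fastforce
  thus ?thesis by (simp add: dzero_eq mnm_zero_iff)
qed

lemma lc_diff: "lc a b c - lc a' b' c' = lc (a - a') (b - b') (c - c')"
  by (simp add: lc_def fun_eq_iff algebra_simps)

lemma lc_add: "lc a b c + lc a' b' c' = lc (a + a') (b + b') (c + c')"
  by (simp add: lc_def fun_eq_iff algebra_simps)

lemma lc_scale: "(\<lambda>i j. z * lc a b c i j) = lc (z * a) (z * b) (z * c)"
  by (simp add: lc_def fun_eq_iff algebra_simps)

lemma lc_inj: "a \<in> Qeps \<Longrightarrow> b \<in> Qeps \<Longrightarrow> c \<in> Qeps \<Longrightarrow> a' \<in> Qeps \<Longrightarrow> b' \<in> Qeps \<Longrightarrow> c' \<in> Qeps \<Longrightarrow>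
   lc a b c = lc a' b' c' \<Longrightarrow> a = a' \<and> b = b' \<and> c = c'"
  using lc_zero[of "a - a'" "b - b'" "c - c'"] lc_diff[of a b c a' b' c'] by simp

lemma lc_span: "k \<in> K \<Longrightarrow> \<exists>a b c. a \<in> Qeps \<and> b \<in> Qeps \<and> c \<in> Qeps \<and> k = lc a b c"
proof -
  assume k: "k \<in> K"
  have sub: "set [dmul h h, h, done_D] \<subseteq> carrier (D\<lparr>carrier := K\<rparr>)" using H2K hK K_one by simp
  have eqS: "KF.Span Zs [dmul h h, h, done_D] = {KF.combine Ks [dmul h h, h, done_D] | Ks. length Ks = length [dmul h h, h, done_D] \<and> set Ks \<subseteq> Zs}"
    by (rule KF.Span_eq_combine_set_length_version[OF ZsKF sub])
  have "k \<in> KF.Span Zs [dmul h h, h, done_D]" using k by (simp only: sp)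
  hence "k \<in> {KF.combine Ks [dmul h h, h, done_D] | Ks. length Ks = length [dmul h h, h, done_D] \<and> set Ks \<subseteq> Zs}"
    by (simp only: eqS)
  then obtain Ks where Ks: "k = KF.combine Ks [dmul h h, h, done_D]" "length Ks = 3" "set Ks \<subseteq> Zs"
    by auto
  then obtain k1 k2 k3 where K3: "Ks = [k1, k2, k3]"
    by (auto simp: numeral_3_eq_3 length_Suc_conv)
  obtain a b c where "k1 = mnm a 0 0" "k2 = mnm b 0 0" "k3 = mnm c 0 0" "a \<in> Qeps" "b \<in> Qeps" "c \<in> Qeps"
    using Ks(3) K3 by (auto simp: Zs_def)
  thus ?thesis using Ks(1) K3 combine3 by blast
qed

lemma lc_K: "a \<in> Qeps \<Longrightarrow> b \<in> Qeps \<Longrightarrow> c \<in> Qeps \<Longrightarrow> lc a b c \<in> K"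
proof -
  assume abc: "a \<in> Qeps" "b \<in> Qeps" "c \<in> Qeps"
  have "lc a b c = (\<lambda>i j. a * dmul h h i j) + (\<lambda>i j. b * h i j) + (\<lambda>i j. c * done_D i j)"
    by (simp add: lc_def fun_eq_iff)
  thus ?thesis using K_add K_scale abc H2K hK K_one by simp
qed

lemma dstar_H2: "dstar (dmul h h) = dmul h h"
  using dstar_dmul[OF supp_h supp_h] hH by simp

lemma dstar_lc: "dstar (lc a b c) = lc (cnj a) (cnj b) (cnj c)"
proof -
  have e1: "\<And>i j. cnj (dmul h h i j) * eps ^ (i * j) = dmul h h i j"
    using dstar_H2 by (simp add: dstar_def fun_eq_iff)
  have e2: "\<And>i j. cnj (h i j) * eps ^ (i * j) = h i j"
    using hH by (simp add: dstar_def fun_eq_iff)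
  have e3: "\<And>i j. cnj (done_D i j) * eps ^ (i * j) = done_D i j"
    by (simp add: done_D_def)
  show ?thesis
  proof (intro ext)
    fix i j
    have "dstar (lc a b c) i j = cnj a * (cnj (dmul h h i j) * eps ^ (i * j)) + cnj b * (cnj (h i j) * eps ^ (i * j))
        + cnj c * (cnj (done_D i j) * eps ^ (i * j))"
      by (simp add: dstar_def lc_def algebra_simps)
    also have "\<dots> = lc (cnj a) (cnj b) (cnj c) i j" by (simp only: e1 e2 e3 lc_def)
    finally show "dstar (lc a b c) i j = lc (cnj a) (cnj b) (cnj c) i j" .
  qed
qed

lemma dmul_lc_left: "dmul (lc a b c) y = (\<lambda>i j. a * dmul (dmul h h) y i j + b * dmul h y i j + c * dmul done_D y i j)"
proof -
  have e: "lc a b c = (\<lambda>i j. a * dmul h h i j) + (\<lambda>i j. b * h i j) + (\<lambda>i j. c * done_D i j)"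
    by (simp add: lc_def fun_eq_iff)
  show ?thesis unfolding e by (simp add: dmul_add_left dmul_scale_left fun_eq_iff)
qed

lemma dmul_lc_right: "dmul y (lc a b c) = (\<lambda>i j. a * dmul y (dmul h h) i j + b * dmul y h i j + c * dmul y done_D i j)"
proof -
  have e: "lc a b c = (\<lambda>i j. a * dmul h h i j) + (\<lambda>i j. b * h i j) + (\<lambda>i j. c * done_D i j)"
    by (simp add: lc_def fun_eq_iff)
  show ?thesis unfolding e by (simp add: dmul_add_right dmul_scale_right fun_eq_iff)
qed

lemma H3_real: "\<exists>a b c. a \<in> Qeps \<and> b \<in> Qeps \<and> c \<in> Qeps \<and> Im a = 0 \<and> Im b = 0 \<and> Im c = 0 \<and> dmul h (dmul h h) = lc a b c"
proof -
  have "dmul h (dmul h h) \<in> K" using K_mult hK H2K by simp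
  then obtain a b c where abc: "a \<in> Qeps" "b \<in> Qeps" "c \<in> Qeps" "dmul h (dmul h h) = lc a b c"
    using lc_span by blast
  have "dstar (dmul h (dmul h h)) = dmul (dstar (dmul h h)) (dstar h)"
    using dstar_dmul[OF supp_h] by simp
  also have "\<dots> = dmul h (dmul h h)" using dstar_H2 hH dmul_assoc[OF supp_h supp_h supp_h] by simp
  finally have "lc (cnj a) (cnj b) (cnj c) = lc a b c" using abc(4) dstar_lc by simp
  hence "cnj a = a \<and> cnj b = b \<and> cnj c = c" using lc_inj[of "cnj a" "cnj b" "cnj c" a b c] abc by simp
  thus ?thesis using abc Qeps_real by blast
qed

end


lemma cubic_root: "\<exists>t::real. t^3 = A * t^2 + B * t + C"
proof -
  define M where "M = 1 + \<bar>A\<bar> + \<bar>B\<bar> + \<bar>C\<bar>"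
  have M1: "M \<ge> 1" unfolding M_def by simp
  have bnd: "\<bar>A * x^2 + B * x + C\<bar> < M^3" if x: "\<bar>x\<bar> = M" for x
  proof -
    have M2: "M \<le> M^2" using mult_left_mono[of 1 M M] M1 by (simp add: power2_eq_square)
    have "\<bar>A * x^2 + B * x + C\<bar> \<le> \<bar>A\<bar> * M^2 + \<bar>B\<bar> * M + \<bar>C\<bar>"
    proof -
      have t1: "\<bar>A * x^2 + B * x + C\<bar> \<le> \<bar>A * x^2 + B * x\<bar> + \<bar>C\<bar>" by (rule abs_triangle_ineq)
      have t2: "\<bar>A * x^2 + B * x\<bar> \<le> \<bar>A * x^2\<bar> + \<bar>B * x\<bar>" by (rule abs_triangle_ineq)
      have "\<bar>A * x^2 + B * x + C\<bar> \<le> \<bar>A * x^2\<bar> + \<bar>B * x\<bar> + \<bar>C\<bar>" using t1 t2 by linarith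
      also have "\<dots> = \<bar>A\<bar> * M^2 + \<bar>B\<bar> * M + \<bar>C\<bar>" proof -
        have "x^2 = M^2" by (metis x power2_abs)
        thus ?thesis using x by (simp add: abs_mult)
      qed
      finally show ?thesis .
    qed
    also have "\<dots> \<le> \<bar>A\<bar> * M^2 + \<bar>B\<bar> * M^2 + \<bar>C\<bar> * M^2"
    proof -
      have "\<bar>B\<bar> * M \<le> \<bar>B\<bar> * M^2" by (rule mult_left_mono[OF M2]) simp
      moreover have "\<bar>C\<bar> * 1 \<le> \<bar>C\<bar> * M^2" by (rule mult_left_mono) (use M1 M2 in auto)
      ultimately show ?thesis by linarith
    qed
    also have "\<dots> = (M - 1) * M^2" unfolding M_def by (simp add: algebra_simps)
    also have "\<dots> < M * M^2" using M1 by (intro mult_strict_right_mono) auto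
    also have "\<dots> = M^3" by (simp add: power3_eq_cube power2_eq_square)
    finally show ?thesis .
  qed
  define f where "f = (\<lambda>t::real. t^3 - (A * t^2 + B * t + C))"
  have fM: "f M \<ge> 0"
  proof -
    have "\<bar>A * M^2 + B * M + C\<bar> < M^3" using bnd[of M] M1 by simp
    thus ?thesis unfolding f_def by linarith
  qed
  have fm: "f (- M) \<le> 0"
  proof -
    have "\<bar>A * (-M)^2 + B * (-M) + C\<bar> < M^3" using bnd[of "-M"] M1 by simp
    moreover have "(-M)^3 = - (M^3)" by (simp add: power3_eq_cube)
    ultimately show ?thesis unfolding f_def by linarith
  qed
  have cont: "continuous_on {-M..M} f" unfolding f_def by (intro continuous_intros)
  have "\<exists>x. -M \<le> x \<and> x \<le> M \<and> f x = 0" by (rule IVT'[OF fm fM _ cont]) (use M1 in linarith)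
  then obtain t where "f t = 0" by blast
  thus ?thesis unfolding f_def by (intro exI[of _ t]) simp
qed


locale maxKr = maxKh +
  fixes a0 b0 c0 :: complex and rho :: real
  assumes co: "a0 \<in> Qeps" "b0 \<in> Qeps" "c0 \<in> Qeps"
    and H3: "dmul h (dmul h h) = lc a0 b0 c0"
    and re: "Im a0 = 0" "Im b0 = 0" "Im c0 = 0"
    and rt: "rho^3 = Re a0 * rho^2 + Re b0 * rho + Re c0"
begin

abbreviation "r \<equiv> complex_of_real rho"

lemma rtc: "r^3 = a0 * r^2 + b0 * r + c0"
proof -
  have A: "a0 = of_real (Re a0)" "b0 = of_real (Re b0)" "c0 = of_real (Re c0)"
    using re by (simp_all add: complex_eq_iff)
  have "r^3 = of_real (rho^3)" by simp
  also have "\<dots> = of_real (Re a0 * rho^2 + Re b0 * rho + Re c0)" using rt by simp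
  also have "\<dots> = of_real (Re a0) * r^2 + of_real (Re b0) * r + of_real (Re c0)" by simp
  also have "\<dots> = a0 * r^2 + b0 * r + c0" by (simp only: A[symmetric])
  finally show ?thesis .
qed

definition chi :: "delt \<Rightarrow> complex" where
  "chi k = (THE z. \<exists>a b c. a \<in> Qeps \<and> b \<in> Qeps \<and> c \<in> Qeps \<and> k = lc a b c \<and> z = a * r^2 + b * r + c)"

lemma chi_lc: "a \<in> Qeps \<Longrightarrow> b \<in> Qeps \<Longrightarrow> c \<in> Qeps \<Longrightarrow> chi (lc a b c) = a * r^2 + b * r + c"
proof -
  assume abc: "a \<in> Qeps" "b \<in> Qeps" "c \<in> Qeps"
  show ?thesis unfolding chi_def
  proof (rule the_equality)
    show "\<exists>a' b' c'. a' \<in> Qeps \<and> b' \<in> Qeps \<and> c' \<in> Qeps \<and> lc a b c = lc a' b' c' \<and> a * r^2 + b * r + c = a' * r^2 + b' * r + c'"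
      using abc by blast
    fix z assume "\<exists>a' b' c'. a' \<in> Qeps \<and> b' \<in> Qeps \<and> c' \<in> Qeps \<and> lc a b c = lc a' b' c' \<and> z = a' * r^2 + b' * r + c'"
    then obtain a' b' c' where h: "a' \<in> Qeps" "b' \<in> Qeps" "c' \<in> Qeps" "lc a b c = lc a' b' c'" "z = a' * r^2 + b' * r + c'"
      by blast
    have "a = a' \<and> b = b' \<and> c = c'" by (rule lc_inj[OF abc h(1-4)])
    thus "z = a * r^2 + b * r + c" using h(5) by simp
  qed
qed

lemma chi_add: "x \<in> K \<Longrightarrow> y \<in> K \<Longrightarrow> chi (x + y) = chi x + chi y"
proof -
  assume "x \<in> K" "y \<in> K"
  then obtain a b c a' b' c' where "a \<in> Qeps" "b \<in> Qeps" "c \<in> Qeps" "x = lc a b c"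
     "a' \<in> Qeps" "b' \<in> Qeps" "c' \<in> Qeps" "y = lc a' b' c'" using lc_span by meson
  thus ?thesis by (simp add: lc_add chi_lc algebra_simps)
qed

lemma chi_scale: "z \<in> Qeps \<Longrightarrow> x \<in> K \<Longrightarrow> chi (\<lambda>i j. z * x i j) = z * chi x"
proof -
  assume z: "z \<in> Qeps" and "x \<in> K"
  then obtain a b c where "a \<in> Qeps" "b \<in> Qeps" "c \<in> Qeps" "x = lc a b c" using lc_span by meson
  thus ?thesis using z by (simp add: lc_scale chi_lc algebra_simps)
qed

lemma dmul_h_done: "dmul h done_D = h" using supp_h by (simp add: done_eq dmul_one_right)
lemma dmul_done_left: "supp y \<Longrightarrow> dmul done_D y = y" by (simp add: done_eq dmul_one_left)

lemma chi_h: "x \<in> K \<Longrightarrow> chi (dmul h x) = r * chi x"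
proof -
  assume "x \<in> K"
  then obtain a b c where abc: "a \<in> Qeps" "b \<in> Qeps" "c \<in> Qeps" "x = lc a b c" using lc_span by meson
  have "dmul h x = lc (a * a0 + b) (a * b0 + c) (a * c0)"
    unfolding abc(4) dmul_lc_right H3 dmul_h_done by (simp add: lc_def fun_eq_iff algebra_simps)
  hence "chi (dmul h x) = (a * a0 + b) * r^2 + (a * b0 + c) * r + a * c0"
    using abc co by (simp add: chi_lc)
  also have "\<dots> = a * (a0 * r^2 + b0 * r + c0) + b * r^2 + c * r" by (simp add: algebra_simps)
  also have "\<dots> = r * chi x" unfolding rtc[symmetric] abc(4) using abc
    by (simp add: chi_lc algebra_simps power2_eq_square power3_eq_cube)
  finally show ?thesis .
qed

lemma chi_mult: "x \<in> K \<Longrightarrow> y \<in> K \<Longrightarrow> chi (dmul x y) = chi x * chi y"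
proof -
  assume x: "x \<in> K" and y: "y \<in> K"
  then obtain a b c where abc: "a \<in> Qeps" "b \<in> Qeps" "c \<in> Qeps" "x = lc a b c" using lc_span by meson
  have hy: "dmul h y \<in> K" using K_mult hK y by simp
  have hhy: "dmul h (dmul h y) \<in> K" using K_mult hK hy by simp
  have e: "dmul x y = (\<lambda>i j. a * dmul h (dmul h y) i j) + (\<lambda>i j. b * dmul h y i j) + (\<lambda>i j. c * y i j)"
    unfolding abc(4) dmul_lc_left dmul_assoc[OF supp_h supp_h supp_K[OF y]] dmul_done_left[OF supp_K[OF y]]
    by (simp add: fun_eq_iff)
  have "chi (dmul x y) = a * chi (dmul h (dmul h y)) + b * chi (dmul h y) + c * chi y"
    unfolding e using abc hy hhy y K_scale K_add by (simp add: chi_add chi_scale)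
  also have "\<dots> = (a * r^2 + b * r + c) * chi y" using chi_h hy y by (simp add: algebra_simps power2_eq_square)
  also have "\<dots> = chi x * chi y" using abc by (simp add: chi_lc)
  finally show ?thesis .
qed

lemma chi_one: "chi done_D = 1"
proof -
  have e: "done_D = lc 0 0 1" by (simp add: lc_def fun_eq_iff)
  show ?thesis by (subst e) (simp add: chi_lc)
qed

lemma chi_zero: "chi 0 = 0"
proof -
  have e: "(0::delt) = lc 0 0 0" by (simp add: lc_def fun_eq_iff)
  show ?thesis by (subst e) (simp add: chi_lc)
qed

lemma chi_star: "x \<in> K \<Longrightarrow> chi (dstar x) = cnj (chi x)"
proof -
  assume "x \<in> K"
  then obtain a b c where abc: "a \<in> Qeps" "b \<in> Qeps" "c \<in> Qeps" "x = lc a b c" using lc_span by meson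
  thus ?thesis by (simp add: dstar_lc chi_lc)
qed

lemma chi_nz: "x \<in> K \<Longrightarrow> x \<noteq> 0 \<Longrightarrow> chi x \<noteq> 0"
proof -
  assume x: "x \<in> K" "x \<noteq> 0"
  have "x \<in> Units (D\<lparr>carrier := K\<rparr>)" using subfield.subfield_Units[OF K] x by (simp add: dzero_eq)
  then obtain y where y: "y \<in> K" "dmul y x = done_D" by (auto simp: Units_def)
  hence "chi y * chi x = 1" using chi_mult[OF y(1) x(1)] chi_one by simp
  thus ?thesis by auto
qed

lemma finsum_K: "(\<forall>i<(n::nat). F i \<in> K) \<Longrightarrow> finsum D F {..<n} \<in> K \<and> chi (finsum D F {..<n}) = (\<Sum>i<n. chi (F i))"
proof (induct n)
  case 0
  have z: "0 \<in> K" using subringE(2)[OF Ksubring] by (simp add: dzero_eq)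
  have e: "finsum D F {..<0} = 0" using finsum_D_0[of F] by simp
  show ?case unfolding e unfolding lessThan_0 sum.empty using z chi_zero by blast
next
  case (Suc n)
  have F: "F \<in> {..<Suc n} \<rightarrow> Dcar" using Suc(2) K_sub by auto
  have e: "finsum D F {..<Suc n} = F n + finsum D F {..<n}" by (rule finsum_D_Suc[OF F])
  have Fn: "F n \<in> K" using Suc(2) by simp
  have IH: "finsum D F {..<n} \<in> K" "chi (finsum D F {..<n}) = (\<Sum>i<n. chi (F i))" using Suc by auto
  have A: "F n + finsum D F {..<n} \<in> K" by (rule K_add[OF Fn IH(1)])
  have B: "chi (F n + finsum D F {..<n}) = (\<Sum>i<Suc n. chi (F i))"
    unfolding sum.lessThan_Suc chi_add[OF Fn IH(1)] IH(2) by (rule add.commute)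
  show ?case unfolding e using A B by blast
qed

lemma formally_real: "formally_real_D K"
  unfolding formally_real_D_def
proof (intro allI impI notI)
  fix n :: nat and rr :: "nat \<Rightarrow> delt"
  assume n: "n \<ge> 1"
    and H: "\<forall>i<n. rr i \<in> K \<and> rr i \<otimes>\<^bsub>D\<^esub> dstar (rr i) \<noteq> \<zero>\<^bsub>D\<^esub>"
    and Z: "finsum D (\<lambda>i. rr i \<otimes>\<^bsub>D\<^esub> dstar (rr i)) {..<n} = \<zero>\<^bsub>D\<^esub>"
  have rK: "\<And>i. i < n \<Longrightarrow> rr i \<in> K" using H by auto
  have sK: "\<And>i. i < n \<Longrightarrow> dstar (rr i) \<in> K" using rK S by auto
  have FK: "\<forall>i<n. dmul (rr i) (dstar (rr i)) \<in> K" using rK sK K_mult by auto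
  have rnz: "\<And>i. i < n \<Longrightarrow> rr i \<noteq> 0" using H by (auto simp: dzero_eq dmul_zero_left)
  have "chi (finsum D (\<lambda>i. dmul (rr i) (dstar (rr i))) {..<n}) = (\<Sum>i<n. chi (dmul (rr i) (dstar (rr i))))"
    using finsum_K[OF FK] by simp
  also have "\<dots> = (\<Sum>i<n. chi (rr i) * cnj (chi (rr i)))"
    by (intro sum.cong refl) (simp add: chi_mult rK sK chi_star)
  also have "\<dots> = (\<Sum>i<n. complex_of_real ((cmod (chi (rr i)))^2))"
    by (simp only: complex_norm_square)
  also have "\<dots> = complex_of_real (\<Sum>i<n. (cmod (chi (rr i)))^2)"
    by (simp only: of_real_sum)
  finally have eq: "chi (finsum D (\<lambda>i. dmul (rr i) (dstar (rr i))) {..<n}) = complex_of_real (\<Sum>i<n. (cmod (chi (rr i)))^2)" .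
  have pos: "(\<Sum>i<n. (cmod (chi (rr i)))^2) > 0"
    using n by (intro sum_pos) (auto simp: chi_nz rK rnz lessThan_empty_iff)
  have zz: "chi (finsum D (\<lambda>i. dmul (rr i) (dstar (rr i))) {..<n}) = 0"
    using Z chi_zero by (simp add: dzero_eq)
  have "complex_of_real (\<Sum>i<n. (cmod (chi (rr i)))^2) = 0" by (metis eq zz)
  hence "(\<Sum>i<n. (cmod (chi (rr i)))^2) = 0" by (simp only: of_real_eq_0_iff)
  thus False using pos by simp
qed

end


lemma (in maxKh) fr_h: "formally_real_D K"
proof -
  obtain a0 b0 c0 where abc: "a0 \<in> Qeps" "b0 \<in> Qeps" "c0 \<in> Qeps" "Im a0 = 0" "Im b0 = 0" "Im c0 = 0"
    "dmul h (dmul h h) = lc a0 b0 c0" using H3_real by blast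
  obtain rho where rt: "rho^3 = Re a0 * rho^2 + Re b0 * rho + Re c0" using cubic_root by blast
  interpret maxKr K h a0 b0 c0 rho
    by (unfold_locales) (use abc rt in auto)
  show ?thesis by (rule formally_real)
qed

lemma (in maxKs) fr_s: "formally_real_D K"
proof -
  obtain h where h: "h \<in> K" "dstar h = h" "KF.independent Zs [dmul h h, h, done_D]" "KF.Span Zs [dmul h h, h, done_D] = K"
    using basis_exists by blast
  interpret maxKh K h by (unfold_locales) (use h in auto)
  show ?thesis by (rule fr_h)
qed

lemma conj1: "maximal_subfield_D K \<and> dstar ` K \<subseteq> K \<longrightarrow> formally_real_D K"
proof
  assume a: "maximal_subfield_D K \<and> dstar ` K \<subseteq> K"
  interpret maxKs K
    by (intro maxKs.intro maxK.intro maxKs_axioms.intro) (use a in \<open>auto simp: maximal_subfield_D_def\<close>)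
  show "formally_real_D K" by (rule fr_s)
qed

theorem mainTheorem11:
  shows "(\<forall>K. maximal_subfield_D K \<and> dstar ` K \<subseteq> K \<longrightarrow> formally_real_D K)
    \<and> \<not> formally_real_D (carrier D)
    \<and> dstar d1 \<otimes>\<^bsub>D\<^esub> d1 \<oplus>\<^bsub>D\<^esub> dstar d2 \<otimes>\<^bsub>D\<^esub> d2 \<oplus>\<^bsub>D\<^esub> dstar d3 \<otimes>\<^bsub>D\<^esub> d3
        \<oplus>\<^bsub>D\<^esub> dstar d4 \<otimes>\<^bsub>D\<^esub> d4 = \<zero>\<^bsub>D\<^esub>"
  using conj1 conj2 conj3 by blast


end
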